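(* Let $p>3$ be prime, $t\in\{1,3,p,3p\}$, and $1\le r\le 3p-1$ with $\gcd(r,3p)=1$. Then $\Lambda(p,r,t)=\{1\}$ if $r\equiv 2\pmod 3$ and $|r|_p$ is odd, and $\Lambda(p,r,t)=\emptyset$ otherwise.
   Context: $|r|_m$ is the multiplicative order of $r$ modulo $m$ (with $|r|_1=1$). $S_k(x):=1+x+\cdots+x^{k-1}$, $S_0:=0$. For $m\ge1$ with $\gcd(r,m)=1$, $\kappa(m,r,t):=\dfrac{m|r|_m}{\gcd(m,\,tS_{|r|_m}(r))}$. For $d\in\{1,3,p,3p\}$, $\Lambda(d,r,t):=\{\ell>0:\ \ell \text{ divides } \frac{|r|_{3p}}{\gcd(\kappa(d,r,t),|r|_{3p})}\text{ and }\gcd(r^{\ell\kappa(d,r,t)}-1,3p)=d\}$. *)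

theory Defs
  imports "HOL-Number_Theory.Number_Theory"
begin

text \<open>Multiplicative order: we use the library's ord n a (Pocklington), which
  for coprime n a is the least d > 0 with a^d = 1 mod n; in particular ord 1 r = 1.\<close>

definition S :: "nat \<Rightarrow> nat \<Rightarrow> nat" where
  "S k x = (\<Sum>i<k. x ^ i)"

definition kappa :: "nat \<Rightarrow> nat \<Rightarrow> nat \<Rightarrow> nat" where
  "kappa m r t = (m * ord m r) div gcd m (t * S (ord m r) r)"

definition Lambda :: "nat \<Rightarrow> nat \<Rightarrow> nat \<Rightarrow> nat \<Rightarrow> nat set" where
  "Lambda p d r t = {l. l > 0 \<and>
      l dvd (ord (3*p) r div gcd (kappa d r t) (ord (3*p) r)) \<and>
      gcd (r ^ (l * kappa d r t) - 1) (3*p) = d}"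

end

theory Submission
  imports Defs
begin

lemma pow2_mod3: "(2::nat)^n mod 3 = (if even n then 1 else 2)"
proof (induction n)
  case 0 then show ?case by simp
next
  case (Suc n)
  have "(2::nat)^Suc n mod 3 = (2 * (2^n mod 3)) mod 3"
    by (simp add: mod_mult_right_eq)
  then show ?case using Suc by auto
qed

lemma three_dvd_pow_minus1:
  fixes r n :: nat
  assumes "r mod 3 = 1 \<or> r mod 3 = 2"
  shows "3 dvd r^n - 1 \<longleftrightarrow> (r mod 3 = 1 \<or> even n)"
proof -
  have r0: "r \<ge> 1" using assms by (cases r) auto
  have "r^n \<ge> 1" using r0 by simp
  then have "3 dvd r^n - 1 \<longleftrightarrow> [r^n = 1] (mod 3)" by (simp add: cong_altdef_nat)
  also have "\<dots> \<longleftrightarrow> r^n mod 3 = 1" by (simp add: cong_def)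
  also have "r^n mod 3 = (r mod 3)^n mod 3" by (simp add: power_mod)
  finally show ?thesis using assms pow2_mod3[of n] by auto
qed

lemma gcd_3p:
  fixes x p :: nat
  assumes "prime p" "p > 3"
  shows "gcd x (3*p) = p \<longleftrightarrow> (p dvd x \<and> \<not> 3 dvd x)"
proof
  assume h: "gcd x (3*p) = p"
  then have "p dvd x" by (metis gcd_dvd1)
  moreover have "\<not> 3 dvd x"
  proof
    assume "3 dvd x"
    then have "3 dvd gcd x (3*p)" by simp
    then have "3 dvd p" using h by simp
    moreover have "\<forall>m. m dvd p \<longrightarrow> m = 1 \<or> m = p" using assms(1) prime_nat_iff by blast
    ultimately have "(3::nat) = 1 \<or> 3 = p" by blast
    then show False using assms(2) by simp
  qed
  ultimately show "p dvd x \<and> \<not> 3 dvd x" by simp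
next
  assume h: "p dvd x \<and> \<not> 3 dvd x"
  have "p dvd gcd x (3*p)" using h by simp
  then obtain k where k: "gcd x (3*p) = p * k" by blast
  have "p * k dvd p * 3" using k gcd_dvd2[of x "3*p"] by (simp add: mult.commute)
  then have "k dvd 3" using prime_gt_0_nat[OF assms(1)] by (simp add: nat_mult_dvd_cancel_disj)
  then have "k \<le> 3" "k > 0" using dvd_imp_le[of k 3] by (auto intro: gr0I)
  then have "k = 1 \<or> k = 2 \<or> k = 3" by auto
  then have "k = 1 \<or> k = 3" using \<open>k dvd 3\<close> by auto
  moreover have "k \<noteq> 3"
  proof
    assume "k = 3"
    then have "3 dvd gcd x (3*p)" using k by simp
    then show False using h by (metis dvd_trans gcd_dvd1)
  qed
  ultimately show "gcd x (3*p) = p" using k by auto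
qed

theorem lemma5p4:
  fixes p r t :: nat
  assumes "prime p" and "p > 3"
    and "t \<in> {1, 3, p, 3*p}"
    and "1 \<le> r" and "r \<le> 3*p - 1" and "coprime r (3*p)"
  shows "Lambda p p r t =
           (if [r = 2] (mod 3) \<and> odd (ord p r) then {1} else {})"
proof -
  define e where "e = ord p r"
  define K where "K = kappa p r t"
  define Oo where "Oo = ord (3*p) r"
  have cop_p: "coprime p r" using assms(6) by (simp add: coprime_commute)
  have cop3: "coprime 3 r" using assms(6) by (simp add: coprime_commute)
  have e0: "e > 0" using cop_p e_def by simp
  have r3: "r mod 3 = 1 \<or> r mod 3 = 2"
  proof -
    have "r mod 3 \<noteq> 0"
    proof
      assume "r mod 3 = 0"
      then have "(3::nat) dvd r" by (simp add: mod_0_imp_dvd)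
      then have "is_unit (3::nat)" using cop3 coprime_absorb_left by blast
      then show False by simp
    qed
    then show ?thesis by linarith
  qed
  have gp: "gcd p (t * S e r) = 1 \<or> gcd p (t * S e r) = p"
    using assms(1) gcd_dvd1[of p "t * S e r"] prime_nat_iff[of p] by blast
  have K: "K = e \<or> K = p * e"
    using gp e0 assms(1) unfolding K_def kappa_def e_def[symmetric]
    by (auto simp: prime_gt_0_nat)
  have eK: "e dvd K" using K by auto
  have pdvd: "p dvd r^(l*K) - 1" for l
  proof -
    have "e dvd l*K" using eK by simp
    then have "[r^(l*K) = 1] (mod p)" using ord_divides e_def by blast
    moreover have "r^(l*K) \<ge> 1" using assms(4) by simp
    ultimately show ?thesis by (simp add: cong_altdef_nat)
  qed
  have Kodd: "odd K \<longleftrightarrow> odd e"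
    using K assms(1,2) prime_odd_nat[of p] by auto
  have mem: "l \<in> Lambda p p r t \<longleftrightarrow>
      l > 0 \<and> l dvd (Oo div gcd K Oo) \<and> r mod 3 = 2 \<and> odd l \<and> odd e" for l
  proof -
    have "gcd (r ^ (l * K) - 1) (3*p) = p \<longleftrightarrow> \<not> 3 dvd r^(l*K) - 1"
      using gcd_3p[OF assms(1,2)] pdvd by blast
    also have "\<dots> \<longleftrightarrow> r mod 3 = 2 \<and> odd l \<and> odd e"
      using three_dvd_pow_minus1[OF r3, of "l*K"] r3 Kodd by auto
    finally show ?thesis unfolding Lambda_def K_def Oo_def by auto
  qed
  have c2: "[r = 2] (mod 3) \<longleftrightarrow> r mod 3 = 2" by (simp add: cong_def)
  show ?thesis
  proof (cases "r mod 3 = 2 \<and> odd e")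
    case False
    then show ?thesis using mem c2 e_def by auto
  next
    case True
    have "Oo dvd 2*K"
    proof -
      have "[r^(2*K) = 1] (mod p)"
        using ord_divides e_def eK by (metis dvd_mult)
      moreover have "[r^(2*K) = 1] (mod 3)"
      proof -
        have "r^(2*K) \<ge> 1" using assms(4) by simp
        moreover have "3 dvd r^(2*K) - 1" using three_dvd_pow_minus1[OF r3, of "2*K"] by simp
        ultimately show ?thesis by (simp add: cong_altdef_nat)
      qed
      moreover have "coprime 3 p" using assms(1,2)
      proof -
        have "\<not> p dvd 3" using assms(2) dvd_imp_le[of p 3] by auto
        then have "coprime p 3" using prime_imp_coprime[OF assms(1)] by blast
        then show ?thesis by (simp add: coprime_commute)
      qed
      ultimately have "[r^(2*K) = 1] (mod 3*p)" by (metis coprime_cong_mult_nat)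
      then show ?thesis using ord_divides Oo_def by blast
    qed
    then have dv2: "Oo div gcd K Oo dvd 2"
    proof -
      define g where "g = gcd K Oo"
      have O0: "Oo > 0" using assms(6) Oo_def by (simp add: coprime_commute)
      have g0: "g > 0" using O0 g_def by simp
      obtain a where a: "Oo = g * a" using g_def by (metis dvd_def gcd_dvd2)
      obtain b where b: "K = g * b" using g_def by (metis dvd_def gcd_dvd1)
      have cab: "coprime a b"
      proof -
        have "coprime (Oo div g) (K div g)"
          using div_gcd_coprime[of K Oo] O0 g_def by (simp add: coprime_commute)
        then show ?thesis using a b g0 by simp
      qed
      have "g * a dvd g * (2 * b)" using \<open>Oo dvd 2*K\<close> a b by (simp add: ac_simps)
      then have "a dvd 2 * b" using g0 by simp
      then have "a dvd 2" using cab by (simp add: coprime_dvd_mult_left_iff)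
      then show ?thesis using a g0 g_def by (metis nonzero_mult_div_cancel_left not_gr0)
    qed
    have "l \<in> Lambda p p r t \<longleftrightarrow> l = 1" for l
    proof
      assume "l \<in> Lambda p p r t"
      then have "l dvd 2" "odd l" using mem dv2 dvd_trans by blast+
      then have "l \<le> 2" "l > 0" using dvd_imp_le[of l 2] by (auto intro: gr0I)
      then have "l = 1 \<or> l = 2" by auto
      then show "l = 1" using \<open>odd l\<close> by auto
    next
      assume "l = 1" then show "l \<in> Lambda p p r t" using mem True by simp
    qed
    then show ?thesis using True c2 e_def by auto
  qed
qed

end
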